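(* Let $G=(V,E)$ be an undirected unweighted graph with $n$ vertices, let $f$ be a positive integer with $n>f$, and let $c\ge1$ be a constant. Let $A_0=V$ and, for $i=1,\dots,f-1$, let $A_i$ be obtained by including each vertex independently with probability $p_i=\min((c+3)n^{-i/f}\log n,1)$ (all choices independent). Say the sampling is good if (1) for every $i\in\{1,\dots,f-1\}$ and every $v\in V$, $Q_i(v)\cap A_i\neq\emptyset$, and (2) for every $i\in\{0,\dots,f-1\}$ and every $v\in V$, $|Q_{i+1}(v)\cap A_i|\le\lceil 12(c+3)n^{1/f}\log n\rceil$. Then the sampling is good with probability at least $1-n^{-c}$.
   Context: Logarithms are base $2$. Vertices have distinct identifiers $ID(\cdot)$ and $d(\cdot,\cdot)$ is hop distance. A vertex $x$ is closer to $v$ than $y$ if $d(v,x)<d(v,y)$, or $d(v,x)=d(v,y)$ and $ID(x)<ID(y)$. For $i\in\{1,\dots,f\}$ and $v\in V$, $Q_i(v)$ is the set of the $\lceil n^{i/f}\rceil$ vertices closest to $v$ in $G$. *)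

theory Defs
  imports "HOL-Probability.Probability"
begin

definition hop_dist :: "('a \<Rightarrow> 'a \<Rightarrow> bool) \<Rightarrow> 'a \<Rightarrow> 'a \<Rightarrow> enat" where
  "hop_dist E u w = (if \<exists>k. (E ^^ k) u w then enat (LEAST k. (E ^^ k) u w) else \<infinity>)"

definition closer :: "('a \<Rightarrow> 'a \<Rightarrow> bool) \<Rightarrow> ('a \<Rightarrow> nat) \<Rightarrow> 'a \<Rightarrow> 'a \<Rightarrow> 'a \<Rightarrow> bool" where
  "closer E ID v x y \<longleftrightarrow> hop_dist E v x < hop_dist E v y \<or>
     (hop_dist E v x = hop_dist E v y \<and> ID x < ID y)"

text \<open>Q_i(v): the ceil(n^(i/f)) vertices closest to v, i.e. those with fewer than
  ceil(n^(i/f)) vertices strictly closer to v.\<close>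
definition Qset :: "'a set \<Rightarrow> ('a \<Rightarrow> 'a \<Rightarrow> bool) \<Rightarrow> ('a \<Rightarrow> nat) \<Rightarrow> nat \<Rightarrow> nat \<Rightarrow> 'a \<Rightarrow> 'a set" where
  "Qset V E ID f i v = {x \<in> V. card {y \<in> V. closer E ID v y x}
      < nat \<lceil>real (card V) powr (real i / real f)\<rceil>}"

definition samp_prob :: "nat \<Rightarrow> nat \<Rightarrow> real \<Rightarrow> nat \<Rightarrow> real" where
  "samp_prob n f c i = min ((c + 3) * real n powr (- real i / real f) * log 2 (real n)) 1"

definition Aset :: "'a set \<Rightarrow> (nat \<times> 'a \<Rightarrow> bool) \<Rightarrow> nat \<Rightarrow> 'a set" where
  "Aset V \<omega> i = (if i = 0 then V else {v \<in> V. \<omega> (i, v)})"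

definition sampling :: "'a set \<Rightarrow> nat \<Rightarrow> real \<Rightarrow> (nat \<times> 'a \<Rightarrow> bool) pmf" where
  "sampling V f c = Pi_pmf ({1..<f} \<times> V) False
      (\<lambda>(i, v). bernoulli_pmf (samp_prob (card V) f c i))"

definition good_sampling ::
  "'a set \<Rightarrow> ('a \<Rightarrow> 'a \<Rightarrow> bool) \<Rightarrow> ('a \<Rightarrow> nat) \<Rightarrow> nat \<Rightarrow> real \<Rightarrow> (nat \<times> 'a \<Rightarrow> bool) \<Rightarrow> bool" where
  "good_sampling V E ID f c \<omega> \<longleftrightarrow>
     (\<forall>i\<in>{1..<f}. \<forall>v\<in>V. Qset V E ID f i v \<inter> Aset V \<omega> i \<noteq> {}) \<and>
     (\<forall>i\<in>{0..<f}. \<forall>v\<in>V. real (card (Qset V E ID f (i + 1) v \<inter> Aset V \<omega> i))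
        \<le> real_of_int \<lceil>12 * (c + 3) * real (card V) powr (1 / real f) * log 2 (real (card V))\<rceil>)"

end

theory Submission
  imports Defs
begin


lemma exp_ge_pow_fact:
  fixes x :: real assumes "x \<ge> 0"
  shows "x ^ k / fact k \<le> exp x"
proof -
  have s: "(\<lambda>n. x^n /\<^sub>R fact n) sums exp x" by (rule exp_converges)
  have "sum (\<lambda>n. x^n /\<^sub>R fact n) {k} \<le> suminf (\<lambda>n. x^n /\<^sub>R fact n)"
    by (rule sum_le_suminf) (use s assms in \<open>auto simp: sums_iff\<close>)
  then show ?thesis using s by (simp add: sums_iff divide_inverse mult.commute)
qed



lemma choose_le_pow_div_fact:
  "real (k choose t) \<le> real k ^ t / fact t"
proof (cases "t \<le> k")
  case True
  have eq: "fact t * fact (k - t) * (k choose t) = (fact k :: nat)" by (rule binomial_fact_lemma[OF True])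
  have "(fact k :: nat) div fact (k - t) = (fact t * (k choose t) * fact (k - t)) div fact (k - t)"
    using eq by (simp add: ac_simps)
  also have "\<dots> = fact t * (k choose t)" by simp
  finally have "fact t * (k choose t) = (fact k :: nat) div fact (k - t)" by simp
  also have "\<dots> \<le> k ^ t" by (rule fact_div_fact_le_pow[OF True])
  finally have "real (fact t * (k choose t)) \<le> real (k ^ t)" by linarith
  hence "fact t * real (k choose t) \<le> real k ^ t" by simp
  thus ?thesis by (simp add: field_simps)
next
  case False thus ?thesis by (simp add: binomial_eq_0)
qed


lemma rank_card:
  fixes lt :: "'a \<Rightarrow> 'a \<Rightarrow> bool"
  assumes fin: "finite V"
    and irr: "\<And>x. x \<in> V \<Longrightarrow> \<not> lt x x"
    and tr: "\<And>x y z. x \<in> V \<Longrightarrow> y \<in> V \<Longrightarrow> z \<in> V \<Longrightarrow> lt x y \<Longrightarrow> lt y z \<Longrightarrow> lt x z"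
    and tot: "\<And>x y. x \<in> V \<Longrightarrow> y \<in> V \<Longrightarrow> x \<noteq> y \<Longrightarrow> lt x y \<or> lt y x"
  shows "card {x \<in> V. card {y \<in> V. lt y x} < m} = min m (card V)"
proof -
  define r where "r x = card {y \<in> V. lt y x}" for x
  have mono: "r x < r y" if "x \<in> V" "y \<in> V" "lt x y" for x y
  proof -
    have "{z \<in> V. lt z x} \<subset> {z \<in> V. lt z y}"
      using that irr tr by blast
    thus ?thesis unfolding r_def using fin by (intro psubset_card_mono) auto
  qed
  have inj: "inj_on r V"
  proof (rule inj_onI, rule ccontr)
    fix x y assume "x \<in> V" "y \<in> V" "r x = r y" "x \<noteq> y"
    thus False using tot[of x y] mono[of x y] mono[of y x] by auto
  qed
  have sub: "r ` V \<subseteq> {..<card V}"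
  proof
    fix z assume "z \<in> r ` V"
    then obtain x where x: "x \<in> V" "z = r x" by auto
    have "{y \<in> V. lt y x} \<subset> V" using x irr by blast
    hence "r x < card V" unfolding r_def using fin by (intro psubset_card_mono) auto
    thus "z \<in> {..<card V}" using x by simp
  qed
  have img: "r ` V = {..<card V}"
    using card_subset_eq[OF _ sub] card_image[OF inj] by simp
  have "{x \<in> V. r x < m} = {x \<in> V. r x \<in> {..<m}}" by simp
  have "r ` {x \<in> V. r x < m} = {..<card V} \<inter> {..<m}"
    using img by auto
  moreover have "card {x \<in> V. r x < m} = card (r ` {x \<in> V. r x < m})"
    by (rule card_image[symmetric]) (use inj in \<open>auto intro: inj_on_subset\<close>)
  ultimately have "card {x \<in> V. r x < m} = card ({..<card V} \<inter> {..<m})" by simp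
  also have "{..<card V} \<inter> {..<m} = {..<min m (card V)}" by auto
  finally show ?thesis unfolding r_def by simp
qed



lemma Qset_card:
  assumes "finite V" "inj_on ID V"
  shows "card (Qset V E ID f i v) = min (nat \<lceil>real (card V) powr (real i / real f)\<rceil>) (card V)"
  unfolding Qset_def
proof (rule rank_card[OF assms(1)])
  fix x y z assume "x \<in> V" "y \<in> V" "z \<in> V" "closer E ID v x y" "closer E ID v y z"
  thus "closer E ID v x z" unfolding closer_def by auto
next
  fix x y assume "x \<in> V" "y \<in> V" "x \<noteq> y"
  hence "ID x \<noteq> ID y" using assms(2) by (auto dest: inj_onD)
  thus "closer E ID v x y \<or> closer E ID v y x" unfolding closer_def by auto
qed (auto simp: closer_def)



lemma prob_Pi_pmf_all:
  assumes "finite A" "S \<subseteq> A"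
  shows "measure_pmf.prob (Pi_pmf A d P) {\<omega>. \<forall>x\<in>S. \<omega> x = b} = (\<Prod>x\<in>S. pmf (P x) b)"
proof -
  have "{\<omega>. \<forall>x\<in>S. \<omega> x = b} = Pi A (\<lambda>x. if x \<in> S then {b} else UNIV)"
    using assms(2) by (auto simp: Pi_def)
  hence "measure_pmf.prob (Pi_pmf A d P) {\<omega>. \<forall>x\<in>S. \<omega> x = b}
     = (\<Prod>x\<in>A. measure_pmf.prob (P x) (if x \<in> S then {b} else UNIV))"
    using measure_Pi_pmf_Pi[OF assms(1)] by simp
  also have "\<dots> = (\<Prod>x\<in>A. if x \<in> S then pmf (P x) b else 1)"
    by (intro prod.cong) (auto simp: measure_pmf_single)
  also have "\<dots> = (\<Prod>x\<in>S. pmf (P x) b)"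
    using prod.If_cases[OF assms(1), of "\<lambda>x. x \<in> S" "\<lambda>x. pmf (P x) b" "\<lambda>_. 1"] assms
    by (simp add: Int_absorb1)
  finally show ?thesis .
qed






lemma sampling_all:
  assumes "finite V" "i \<in> {1..<f}" "T \<subseteq> V"
  shows "measure_pmf.prob (sampling V f c) {\<omega>. \<forall>x\<in>T. \<omega> (i, x) = b}
         = pmf (bernoulli_pmf (samp_prob (card V) f c i)) b ^ card T"
proof -
  have fin: "finite ({1..<f} \<times> V)" using assms(1) by simp
  have sub: "Pair i ` T \<subseteq> {1..<f} \<times> V" using assms by auto
  have "{\<omega>. \<forall>x\<in>T. \<omega> (i, x) = b} = {\<omega>. \<forall>y\<in>Pair i ` T. \<omega> y = b}" by auto
  hence "measure_pmf.prob (sampling V f c) {\<omega>. \<forall>x\<in>T. \<omega> (i, x) = b}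
      = (\<Prod>y\<in>Pair i ` T. pmf ((\<lambda>(i, v). bernoulli_pmf (samp_prob (card V) f c i)) y) b)"
    unfolding sampling_def using prob_Pi_pmf_all[OF fin sub] by simp
  also have "\<dots> = (\<Prod>x\<in>T. pmf (bernoulli_pmf (samp_prob (card V) f c i)) b)"
    by (subst prod.reindex) (auto simp: inj_on_def)
  also have "\<dots> = pmf (bernoulli_pmf (samp_prob (card V) f c i)) b ^ card T" by simp
  finally show ?thesis .
qed

lemma samp_prob_bounds:
  assumes "c \<ge> 1" "card V \<ge> 1"
  shows "0 \<le> samp_prob (card V) f c i" "samp_prob (card V) f c i \<le> 1"
proof -
  have "0 \<le> log 2 (real (card V))" using assms by simp
  thus "0 \<le> samp_prob (card V) f c i" using assms unfolding samp_prob_def by simp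
  show "samp_prob (card V) f c i \<le> 1" unfolding samp_prob_def by simp
qed

lemma log_facts:
  assumes "(n::nat) \<ge> 2"
  shows "log 2 (real n) \<ge> 1" "ln (real n) \<le> log 2 (real n)"
proof -
  show "log 2 (real n) \<ge> 1" using assms by simp
  have "ln 2 \<le> (1::real)" using ln_le_minus_one[of 2] by simp
  moreover have "0 < ln (2::real)" by simp
  moreover have "0 \<le> ln (real n)" using assms by simp
  ultimately have "ln (real n) \<le> ln (real n) / ln 2"
    by (simp add: le_divide_eq mult_left_le)
  thus "ln (real n) \<le> log 2 (real n)" by (simp add: log_def)
qed




lemma Qset_sub: "Qset V E ID f i v \<subseteq> V" unfolding Qset_def by auto

lemma B1_bound:
  assumes fin: "finite V" and inj: "inj_on ID V" and f: "0 < f" "f < card V" and c: "c \<ge> 1"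
    and i: "i \<in> {1..<f}"
  shows "measure_pmf.prob (sampling V f c) {\<omega>. \<forall>x\<in>Qset V E ID f i v. \<omega> (i, x) = False}
     \<le> real (card V) powr (- (c + 3))"
proof -
  define n where "n = card V"
  define p where "p = samp_prob n f c i"
  define L where "L = log 2 (real n)"
  define m where "m = nat \<lceil>real n powr (real i / real f)\<rceil>"
  define k where "k = card (Qset V E ID f i v)"
  have n2: "n \<ge> 2" using f n_def by simp
  have L: "L \<ge> 1" "ln (real n) \<le> L" using log_facts[OF n2] L_def by auto
  have p01: "0 \<le> p" "p \<le> 1" using samp_prob_bounds[of c V f i] c n2 by (auto simp: p_def n_def)
  have k: "k = min m n" unfolding k_def m_def n_def by (rule Qset_card[OF fin inj])
  have prob: "measure_pmf.prob (sampling V f c) {\<omega>. \<forall>x\<in>Qset V E ID f i v. \<omega> (i, x) = False}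
     = (1 - p) ^ k"
    using sampling_all[OF fin i Qset_sub[of V E ID f i v], where b=False and c=c] pmf_bernoulli_False[OF p01]
    by (simp add: p_def n_def k_def)
  have pos: "real n powr (real i / real f) > 0" using n2 by simp
  have mge: "real m \<ge> real n powr (real i / real f)" unfolding m_def by linarith
  have "real n powr (real i / real f) \<le> real n powr 1"
    using i n2 by (intro powr_mono) auto
  hence nge: "real n \<ge> real n powr (real i / real f)" using n2 by simp
  have kge: "real k \<ge> real n powr (real i / real f)" using k mge nge by (simp add: min_def)
  have k1: "k \<ge> 1" using kge pos by linarith
  show ?thesis
  proof (cases "p = 1")
    case True
    thus ?thesis using prob k1 by (simp add: power_0_left)
  next
    case False
    hence pdef: "p = (c + 3) * real n powr (- real i / real f) * L"
      unfolding p_def samp_prob_def L_def by (auto simp: min_def split: if_splits)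
    have "(1 - p) ^ k \<le> exp (- p) ^ k"
      using p01 by (intro power_mono) (auto simp: exp_ge_add_one_self[of "-p", simplified])
    also have "\<dots> = exp (- (p * real k))" by (simp add: exp_of_nat_mult[symmetric] mult.commute)
    also have "p * real k \<ge> p * real n powr (real i / real f)"
      using kge p01 by (intro mult_left_mono) auto
    hence "exp (- (p * real k)) \<le> exp (- (p * real n powr (real i / real f)))" by simp
    also have "p * real n powr (real i / real f) = (c + 3) * L"
      unfolding pdef using n2
      by (simp add: powr_minus field_simps)
    also have "exp (- ((c + 3) * L)) \<le> exp (- ((c + 3) * ln (real n)))"
      using L c by simp
    also have "\<dots> = real n powr (- (c + 3))" using n2 by (simp add: powr_def algebra_simps)
    finally show ?thesis using prob by (simp add: n_def)
  qed
qed




lemma tail_bound: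
  assumes fin: "finite V" and i: "i \<in> {1..<f}" and S: "S \<subseteq> V"
    and p01: "0 \<le> samp_prob (card V) f c i" "samp_prob (card V) f c i \<le> 1"
  shows "measure_pmf.prob (sampling V f c) {\<omega>. t \<le> card {x\<in>S. \<omega> (i, x)}}
     \<le> real (card S choose t) * samp_prob (card V) f c i ^ t"
proof -
  define p where "p = samp_prob (card V) f c i"
  define TT where "TT = {T. T \<subseteq> S \<and> card T = t}"
  have finS: "finite S" using fin S finite_subset by blast
  have finTT: "finite TT" unfolding TT_def using finS by simp
  have "{\<omega>. t \<le> card {x\<in>S. \<omega> (i, x)}} \<subseteq> (\<Union>T\<in>TT. {\<omega>. \<forall>x\<in>T. \<omega> (i, x) = True})"
  proof
    fix \<omega> assume "\<omega> \<in> {\<omega>. t \<le> card {x\<in>S. \<omega> (i, x)}}"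
    hence "t \<le> card {x\<in>S. \<omega> (i, x)}" by simp
    then obtain T where "T \<subseteq> {x\<in>S. \<omega> (i, x)}" "card T = t"
      by (meson obtain_subset_with_card_n)
    thus "\<omega> \<in> (\<Union>T\<in>TT. {\<omega>. \<forall>x\<in>T. \<omega> (i, x) = True})" unfolding TT_def by auto
  qed
  hence "measure_pmf.prob (sampling V f c) {\<omega>. t \<le> card {x\<in>S. \<omega> (i, x)}}
      \<le> measure_pmf.prob (sampling V f c) (\<Union>T\<in>TT. {\<omega>. \<forall>x\<in>T. \<omega> (i, x) = True})"
    by (intro measure_pmf.finite_measure_mono) auto
  also have "\<dots> \<le> (\<Sum>T\<in>TT. measure_pmf.prob (sampling V f c) {\<omega>. \<forall>x\<in>T. \<omega> (i, x) = True})"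
    by (intro measure_pmf.finite_measure_subadditive_finite finTT) auto
  also have "\<dots> = (\<Sum>T\<in>TT. p ^ t)"
  proof (intro sum.cong refl)
    fix T assume T: "T \<in> TT"
    hence "T \<subseteq> V" "card T = t" using S unfolding TT_def by auto
    thus "measure_pmf.prob (sampling V f c) {\<omega>. \<forall>x\<in>T. \<omega> (i, x) = True} = p ^ t"
      using sampling_all[OF fin i \<open>T \<subseteq> V\<close>, where b=True and c=c] pmf_bernoulli_True[OF p01]
      by (simp add: p_def)
  qed
  also have "\<dots> = real (card S choose t) * p ^ t"
    using n_subsets[OF finS, of t] by (simp add: TT_def)
  finally show ?thesis by (simp add: p_def)
qed

lemma small_tail:
  fixes \<mu> :: real
  assumes "\<mu> \<ge> 0" "real t \<ge> 6 * \<mu>" "t > 0"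
  shows "\<mu> ^ t / fact t \<le> (1/2) ^ t"
proof -
  have tpos: "real t > 0" using assms by simp
  have "\<mu> ^ t / fact t = (\<mu> / real t) ^ t * (real t ^ t / fact t)"
    using tpos by (simp add: power_divide)
  also have "\<dots> \<le> (\<mu> / real t) ^ t * exp (real t)"
    using assms by (intro mult_left_mono exp_ge_pow_fact) auto
  also have "exp (real t) = exp 1 ^ t" by (simp add: exp_of_nat_mult[symmetric])
  also have "(\<mu> / real t) ^ t * exp 1 ^ t = (\<mu> / real t * exp 1) ^ t" by (rule power_mult_distrib[symmetric])
  also have "\<dots> \<le> (1/2) ^ t"
  proof (intro power_mono)
    have "\<mu> / real t \<le> 1/6" using assms tpos by (simp add: divide_le_eq)
    moreover have "exp 1 \<le> (3::real)" using e_less_272 by simp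
    ultimately have "\<mu> / real t * exp 1 \<le> 1/6 * 3"
      using assms tpos by (intro mult_mono) auto
    thus "\<mu> / real t * exp 1 \<le> 1/2" by simp
    show "0 \<le> \<mu> / real t * exp 1" using assms by simp
  qed
  finally show ?thesis .
qed




lemma Aset_pos: "i \<noteq> 0 \<Longrightarrow> Aset V \<omega> i = {v \<in> V. \<omega> (i, v)}" by (simp add: Aset_def)

lemma half_pow_bound:
  assumes "(n::nat) \<ge> 2" "real t \<ge> (c + 3) * log 2 (real n)"
  shows "(1/2::real) ^ t \<le> real n powr (- (c + 3))"
proof -
  have e1: "(2::real) powr real t = 2 ^ t" by (rule powr_realpow) simp
  have e2: "(2::real) powr (- real t) = inverse (2 powr real t)" by (rule powr_minus)
  have "(1/2::real) ^ t = 2 powr (- real t)" unfolding e2 e1 by (simp add: power_one_over inverse_eq_divide)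
  also have "\<dots> \<le> 2 powr (- ((c + 3) * log 2 (real n)))"
    using assms by (intro powr_mono) auto
  also have "- ((c + 3) * log 2 (real n)) = log 2 (real n) * (- (c + 3))" by (simp add: algebra_simps)
  also have "(2::real) powr (log 2 (real n) * (- (c + 3))) = (2 powr (log 2 (real n))) powr (- (c + 3))"
    by (simp only: powr_powr)
  also have "2 powr (log 2 (real n)) = real n" using assms by simp
  finally show ?thesis .
qed

lemma B2_bound:
  assumes fin: "finite V" and inj: "inj_on ID V" and f: "0 < f" "f < card V" and c: "c \<ge> 1"
    and i: "i \<in> {1..<f}"
  shows "measure_pmf.prob (sampling V f c)
     {\<omega>. \<not> real (card (Qset V E ID f (i + 1) v \<inter> Aset V \<omega> i))
        \<le> real_of_int \<lceil>12 * (c + 3) * real (card V) powr (1 / real f) * log 2 (real (card V))\<rceil>}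
     \<le> real (card V) powr (- (c + 3))"
proof -
  define n where "n = card V"
  define p where "p = samp_prob n f c i"
  define L where "L = log 2 (real n)"
  define x where "x = real n powr (real (i + 1) / real f)"
  define m where "m = nat \<lceil>x\<rceil>"
  define Q where "Q = Qset V E ID f (i + 1) v"
  define k where "k = card Q"
  define r where "r = 12 * (c + 3) * real n powr (1 / real f) * L"
  define B where "B = {\<omega>. \<not> real (card (Q \<inter> Aset V \<omega> i)) \<le> real_of_int \<lceil>r\<rceil>}"
  have n2: "n \<ge> 2" using f n_def by simp
  have L: "L \<ge> 1" "ln (real n) \<le> L" using log_facts[OF n2] L_def by auto
  have p01: "0 \<le> p" "p \<le> 1" using samp_prob_bounds[of c V f i] c n2 by (auto simp: p_def n_def)
  have k: "k = min m n" unfolding k_def m_def n_def Q_def x_def by (rule Qset_card[OF fin inj])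
  hence km: "k \<le> m" by simp
  have QV: "Q \<subseteq> V" unfolding Q_def by (rule Qset_sub)
  have i0: "i \<noteq> 0" using i by simp
  have QA: "Q \<inter> Aset V \<omega> i = {y \<in> Q. \<omega> (i, y)}" for \<omega>
    unfolding Aset_pos[OF i0] using QV by auto
  have x1: "x \<ge> 1" unfolding x_def using n2 by (intro ge_one_powr_ge_zero) auto
  have p1: "real n powr (1 / real f) \<ge> 1" using n2 by (intro ge_one_powr_ge_zero) auto
  have xsplit: "x = real n powr (1 / real f) * real n powr (real i / real f)"
    unfolding x_def using n2 by (simp add: powr_add[symmetric] add_divide_distrib)
  have rpos: "r \<ge> (c + 3) * L"
  proof -
    have "(c + 3) * L * 1 \<le> (c + 3) * L * (12 * real n powr (1 / real f))"
      using p1 L c by (intro mult_left_mono) auto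
    moreover have "r = (c + 3) * L * (12 * real n powr (1 / real f))" unfolding r_def by (simp only: ac_simps)
    ultimately show ?thesis by simp
  qed
  have goal: "measure_pmf.prob (sampling V f c) B \<le> real n powr (- (c + 3))"
  proof (cases "p = 1")
    case True
    hence big: "(c + 3) * real n powr (- real i / real f) * L \<ge> 1"
      unfolding p_def samp_prob_def L_def by (auto simp: min_def split: if_splits)
    have "real n powr (real i / real f) * 1 \<le> real n powr (real i / real f) * ((c + 3) * real n powr (- real i / real f) * L)"
      using big by (intro mult_left_mono) auto
    also have "\<dots> = (c + 3) * L * (real n powr (real i / real f) * real n powr (- real i / real f))"
      by (simp add: ac_simps)
    also have "real n powr (real i / real f) * real n powr (- real i / real f) = 1"
      using n2 by (simp add: powr_add[symmetric])
    finally have "real n powr (real i / real f) \<le> (c + 3) * L" by simp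
    hence "x \<le> real n powr (1 / real f) * ((c + 3) * L)"
      unfolding xsplit using p1 by (intro mult_left_mono) auto
    also have "\<dots> \<le> 12 * (real n powr (1 / real f) * ((c + 3) * L))"
    proof -
      have "0 \<le> real n powr (1 / real f) * ((c + 3) * L)" using p1 L c by simp
      thus ?thesis by linarith
    qed
    also have "\<dots> = r" unfolding r_def by (simp only: ac_simps)
    finally have xr: "x \<le> r" .
    have "B = {}"
    proof -
      have "real (card (Q \<inter> Aset V \<omega> i)) \<le> real_of_int \<lceil>r\<rceil>" for \<omega>
      proof -
        have "card (Q \<inter> Aset V \<omega> i) \<le> card Q"
          using QV fin by (intro card_mono) (auto intro: finite_subset)
        hence "real (card (Q \<inter> Aset V \<omega> i)) \<le> real m" using km k_def by simp
        also have "real m = real_of_int \<lceil>x\<rceil>" unfolding m_def using x1 by simp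
        also have "\<dots> \<le> real_of_int \<lceil>r\<rceil>" using xr by (simp add: ceiling_mono)
        finally show ?thesis .
      qed
      thus ?thesis unfolding B_def by auto
    qed
    thus ?thesis by simp
  next
    case False
    hence pdef: "p = (c + 3) * real n powr (- real i / real f) * L"
      unfolding p_def samp_prob_def L_def by (auto simp: min_def split: if_splits)
    define t where "t = nat \<lceil>r\<rceil>"
    define \<mu> where "\<mu> = 2 * (c + 3) * L * real n powr (1 / real f)"
    have r0: "r \<ge> 0" using rpos L c by (smt (verit) mult_nonneg_nonneg)
    have Bsub: "B \<subseteq> {\<omega>. t \<le> card {y \<in> Q. \<omega> (i, y)}}"
    proof
      fix \<omega> assume "\<omega> \<in> B"
      hence "real (card {y \<in> Q. \<omega> (i, y)}) > real_of_int \<lceil>r\<rceil>" unfolding B_def QA by simp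
      hence "\<lceil>r\<rceil> < int (card {y \<in> Q. \<omega> (i, y)})"
        by (metis of_int_less_iff of_int_of_nat_eq)
      thus "\<omega> \<in> {\<omega>. t \<le> card {y \<in> Q. \<omega> (i, y)}}" unfolding t_def by (simp add: nat_le_iff)
    qed
    have "measure_pmf.prob (sampling V f c) B \<le> measure_pmf.prob (sampling V f c) {\<omega>. t \<le> card {y \<in> Q. \<omega> (i, y)}}"
      using Bsub by (intro measure_pmf.finite_measure_mono) auto
    also have "\<dots> \<le> real (card Q choose t) * p ^ t"
      using tail_bound[OF fin i QV, where t=t and c=c] p01 by (simp add: p_def n_def)
    also have "\<dots> \<le> real k ^ t / fact t * p ^ t"
      unfolding k_def using p01 by (intro mult_right_mono choose_le_pow_div_fact) auto
    also have "\<dots> = (real k * p) ^ t / fact t" by (simp add: power_mult_distrib)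
    also have "\<dots> \<le> \<mu> ^ t / fact t"
    proof -
      have "real k \<le> real m" using km by simp
      also have "real m \<le> x + 1" unfolding m_def using x1 by linarith
      also have "\<dots> \<le> 2 * x" using x1 by simp
      finally have kx: "real k \<le> 2 * x" .
      have "real k * p \<le> 2 * x * p" using kx p01 by (intro mult_right_mono) auto
      also have "2 * x * p = 2 * (c + 3) * L * (real n powr (1 / real f) * (real n powr (real i / real f) * real n powr (- real i / real f)))"
        unfolding xsplit pdef by (simp add: ac_simps)
      also have "real n powr (real i / real f) * real n powr (- real i / real f) = 1"
        using n2 by (simp add: powr_add[symmetric])
      finally have "real k * p \<le> \<mu>" unfolding \<mu>_def by simp
      moreover have "0 \<le> real k * p" using p01 by simp
      ultimately show ?thesis by (intro divide_right_mono power_mono) auto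
    qed
    also have "\<dots> \<le> (1/2) ^ t"
    proof (rule small_tail)
      show "0 \<le> \<mu>" unfolding \<mu>_def using L c p1 by simp
      have "real t \<ge> r" unfolding t_def by linarith
      moreover have "r = 6 * \<mu>" unfolding r_def \<mu>_def by simp
      ultimately show "6 * \<mu> \<le> real t" by simp
      show "0 < t" using \<open>real t \<ge> r\<close> rpos L c by (smt (verit) of_nat_0 mult_pos_pos neq0_conv)
    qed
    also have "\<dots> \<le> real n powr (- (c + 3))"
    proof (rule half_pow_bound[OF n2])
      have "real t \<ge> r" unfolding t_def by linarith
      thus "(c + 3) * log 2 (real n) \<le> real t" using rpos L_def by simp
    qed
    finally show ?thesis .
  qed
  thus ?thesis unfolding B_def Q_def r_def L_def n_def by simp
qed




theorem mainTheorem8: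
  fixes V :: "'a set" and E :: "'a \<Rightarrow> 'a \<Rightarrow> bool" and ID :: "'a \<Rightarrow> nat"
    and f :: nat and c :: real
  assumes "finite V"
    and "\<And>x y. E x y \<Longrightarrow> x \<in> V \<and> y \<in> V"
    and "\<And>x y. E x y \<Longrightarrow> E y x"
    and "\<And>x. \<not> E x x"
    and "inj_on ID V"
    and "f > 0" and "card V > f"
    and "c \<ge> 1"
  shows "measure_pmf.prob (sampling V f c) {\<omega>. good_sampling V E ID f c \<omega>}
           \<ge> 1 - real (card V) powr (- c)"
proof -
  note fin = assms(1) and inj = assms(5) and f = assms(6,7) and c = assms(8)
  define n where "n = card V"
  define R where "R = \<lceil>12 * (c + 3) * real (card V) powr (1 / real f) * log 2 (real (card V))\<rceil>"
  define B1 where "B1 = (\<lambda>iv::nat \<times> 'a. {\<omega>. \<forall>x\<in>Qset V E ID f (fst iv) (snd iv). \<omega> (fst iv, x) = False})"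
  define B2 where "B2 = (\<lambda>iv::nat \<times> 'a. {\<omega>. \<not> real (card (Qset V E ID f (fst iv + 1) (snd iv) \<inter> Aset V \<omega> (fst iv)))
        \<le> real_of_int R})"
  define IV where "IV = {1..<f} \<times> V"
  define M where "M = sampling V f c"
  have n2: "n \<ge> 2" using f n_def by simp
  have L: "log 2 (real n) \<ge> 1" using log_facts[OF n2] by auto
  have finIV: "finite IV" unfolding IV_def using fin by simp
  have D0: "real (card (Qset V E ID f (0 + 1) v \<inter> Aset V \<omega> 0)) \<le> real_of_int R" for v \<omega>
  proof -
    have "card (Qset V E ID f (0 + 1) v \<inter> Aset V \<omega> 0) \<le> card (Qset V E ID f 1 v)"
      using fin by (intro card_mono) (auto intro: finite_subset[OF Qset_sub])
    also have "\<dots> \<le> nat \<lceil>real n powr (1 / real f)\<rceil>"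
      using Qset_card[OF fin inj, of E f 1 v] by (simp add: n_def)
    finally have "card (Qset V E ID f (0 + 1) v \<inter> Aset V \<omega> 0) \<le> nat \<lceil>real n powr (1 / real f)\<rceil>" .
    hence "real (card (Qset V E ID f (0 + 1) v \<inter> Aset V \<omega> 0)) \<le> real (nat \<lceil>real n powr (1 / real f)\<rceil>)"
      by (rule of_nat_mono)
    also have "real (nat \<lceil>real n powr (1 / real f)\<rceil>) = real_of_int \<lceil>real n powr (1 / real f)\<rceil>"
    proof -
      have "0 \<le> \<lceil>real n powr (1 / real f)\<rceil>" 
        using ceiling_mono[OF powr_ge_zero[of "real n" "1 / real f"]] by simp
      thus ?thesis by simp
    qed
    also have "\<dots> \<le> real_of_int R"
    proof -
      have "real n powr (1 / real f) * 1 \<le> real n powr (1 / real f) * (12 * (c + 3) * log 2 (real n))"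
      proof (intro mult_left_mono)
        have "1 * 1 \<le> (12 * (c + 3)) * log 2 (real n)" using L c by (intro mult_mono) auto
        thus "1 \<le> 12 * (c + 3) * log 2 (real n)" by simp
      qed simp
      hence "real n powr (1 / real f) \<le> 12 * (c + 3) * real n powr (1 / real f) * log 2 (real n)"
        by (simp add: ac_simps)
      thus ?thesis unfolding R_def n_def by (simp add: ceiling_mono)
    qed
    finally show ?thesis .
  qed
  have sub: "UNIV - (\<Union>iv\<in>IV. B1 iv \<union> B2 iv) \<subseteq> {\<omega>. good_sampling V E ID f c \<omega>}"
  proof
    fix \<omega> assume \<omega>: "\<omega> \<in> UNIV - (\<Union>iv\<in>IV. B1 iv \<union> B2 iv)"
    have c1: "Qset V E ID f i v \<inter> Aset V \<omega> i \<noteq> {}" if "i \<in> {1..<f}" "v \<in> V" for i v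
    proof -
      have "\<omega> \<notin> B1 (i, v)" using \<omega> that unfolding IV_def by auto
      then obtain x where "x \<in> Qset V E ID f i v" "\<omega> (i, x)" unfolding B1_def by auto
      moreover have "x \<in> V" using \<open>x \<in> Qset V E ID f i v\<close> Qset_sub[of V E ID f i v] by blast
      moreover have "i \<noteq> 0" using that by simp
      ultimately show ?thesis using Aset_pos[of i V \<omega>] by auto
    qed
    have c2: "real (card (Qset V E ID f (i + 1) v \<inter> Aset V \<omega> i)) \<le> real_of_int R"
      if "i \<in> {0..<f}" "v \<in> V" for i v
    proof (cases "i = 0")
      case True thus ?thesis using D0 by simp
    next
      case False
      hence "\<omega> \<notin> B2 (i, v)" using \<omega> that unfolding IV_def by auto
      thus ?thesis unfolding B2_def by auto
    qed
    show "\<omega> \<in> {\<omega>. good_sampling V E ID f c \<omega>}"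
      using c1 c2 unfolding good_sampling_def R_def by auto
  qed
  have bound: "measure_pmf.prob M (\<Union>iv\<in>IV. B1 iv \<union> B2 iv) \<le> real (card IV) * (2 * real n powr (- (c + 3)))"
  proof -
    have "measure_pmf.prob M (\<Union>iv\<in>IV. B1 iv \<union> B2 iv) \<le> (\<Sum>iv\<in>IV. measure_pmf.prob M (B1 iv \<union> B2 iv))"
      by (intro measure_pmf.finite_measure_subadditive_finite finIV) auto
    also have "\<dots> \<le> (\<Sum>iv\<in>IV. 2 * real n powr (- (c + 3)))"
    proof (intro sum_mono)
      fix iv assume "iv \<in> IV"
      then obtain i v where iv: "iv = (i, v)" "i \<in> {1..<f}" "v \<in> V" unfolding IV_def by auto
      have "measure_pmf.prob M (B1 iv \<union> B2 iv) \<le> measure_pmf.prob M (B1 iv) + measure_pmf.prob M (B2 iv)"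
        by (intro measure_Un_le) auto
      also have "measure_pmf.prob M (B1 iv) \<le> real n powr (- (c + 3))"
        unfolding M_def B1_def iv n_def using B1_bound[OF fin inj f c iv(2)] by simp
      also have "measure_pmf.prob M (B2 iv) \<le> real n powr (- (c + 3))"
        unfolding M_def B2_def iv n_def R_def using B2_bound[OF fin inj f c iv(2)] by simp
      finally show "measure_pmf.prob M (B1 iv \<union> B2 iv) \<le> 2 * real n powr (- (c + 3))" by simp
    qed
    also have "\<dots> = real (card IV) * (2 * real n powr (- (c + 3)))" by simp
    finally show ?thesis .
  qed
  have cardIV: "real (card IV) \<le> real n * real n"
  proof -
    have "card IV = (f - 1) * n" unfolding IV_def n_def by (simp add: card_cartesian_product)
    also have "\<dots> \<le> n * n" using f n_def by simp
    finally show ?thesis by (metis of_nat_le_iff of_nat_mult)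
  qed
  have arith: "real (card IV) * (2 * real n powr (- (c + 3))) \<le> real n powr (- c)"
  proof -
    have pos: "0 \<le> 2 * real n powr (- (c + 3))" by simp
    have "real (card IV) * (2 * real n powr (- (c + 3))) \<le> real n * real n * (2 * real n powr (- (c + 3)))"
      using cardIV pos by (intro mult_right_mono) auto
    also have "\<dots> = 2 * (real n powr 1 * real n powr 1 * real n powr (- (c + 3)))"
      using n2 by simp
    also have "real n powr 1 * real n powr 1 * real n powr (- (c + 3)) = real n powr (- 1) * real n powr (- c)"
    proof -
      have "real n powr 1 * real n powr 1 * real n powr (- (c + 3)) = real n powr (1 + 1 + - (c + 3))"
        by (simp only: powr_add)
      also have "1 + 1 + - (c + 3) = - 1 + - c" by simp
      also have "real n powr (- 1 + - c) = real n powr (- 1) * real n powr (- c)"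
        by (simp only: powr_add)
      finally show ?thesis .
    qed
    also have "2 * (real n powr (- 1) * real n powr (- c)) = (2 / real n) * real n powr (- c)"
      using n2 by (simp add: powr_minus divide_inverse)
    also have "\<dots> \<le> 1 * real n powr (- c)"
      using n2 by (intro mult_right_mono) auto
    finally show ?thesis by simp
  qed
  have "measure_pmf.prob M {\<omega>. good_sampling V E ID f c \<omega>} \<ge> measure_pmf.prob M (UNIV - (\<Union>iv\<in>IV. B1 iv \<union> B2 iv))"
    using sub by (intro measure_pmf.finite_measure_mono) auto
  also have "measure_pmf.prob M (UNIV - (\<Union>iv\<in>IV. B1 iv \<union> B2 iv)) = 1 - measure_pmf.prob M (\<Union>iv\<in>IV. B1 iv \<union> B2 iv)"
    using measure_pmf.prob_compl[of "\<Union>iv\<in>IV. B1 iv \<union> B2 iv" M] by simp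
  finally show ?thesis using bound arith unfolding M_def n_def by linarith
qed


end
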